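(* Let $\Gamma_H$ be the H-junction tree with edges $e_1,\dots,e_5$ of propagation times $t_1,\dots,t_5$, linearly independent over $\mathbb{Q}$, where the two interior vertices are $A$ (incident to $e_1,e_2,e_3$) and $B$ (incident to $e_3,e_4,e_5$). Then for all $T\ge 0$ $$N(\Gamma_H,A,B,T) = \#[2n_1t_1 + 2n_2t_2 + 2n_3t_3 + 2n_4t_4 \le T - t_3] + \#[2n_1t_1 + 2n_2t_2 + 2n_3t_3 + 2n_5t_5 \le T - t_3] + \#[2n_1t_1 + 2n_2t_2 + 2n_4t_4 + 2n_5t_5 \le T - t_3] - \#[2n_1t_1 + 2n_2t_2 \le T - t_3].$$
   Context: $\Gamma_H$ has six vertices: $A$, $B$, and the four distinct valence-one endpoints of $e_1,e_2,e_4,e_5$ other than $A$, $B$; $e_3$ joins $A$ and $B$. Dynamics: each edge $e_i$ is traversed in time $t_i$; at time $0$ the process starts at $A$ (a point departs from $A$ along each incident edge); at a valence-one vertex a point is reflected; if $k$ points arrive simultaneously at an interior vertex of valence $v$, then $v$ points leave it, one along each incident edge, and $v-k$ new points are said to be born there. $N(\Gamma,A,X,T)$ is the total number of new points born at vertex $X$ up to the moment $T$ when the process starts at $A$. $\#[\text{inequality}]$ denotes the number of tuples of nonnegative integers $n_i$ satisfying the inequality (it is $0$ if the right-hand side is negative). *)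

theory Defs
  imports Main Complex_Main
begin

text \<open>A metric graph: a set of edges E, each edge e joining the two vertices of
  endpts e, traversed in time len e.\<close>

definition incident :: "('e \<Rightarrow> 'v \<times> 'v) \<Rightarrow> 'e \<Rightarrow> 'v \<Rightarrow> 'v \<Rightarrow> bool" where
  "incident endpts e u w \<longleftrightarrow> endpts e = (u, w) \<or> endpts e = (w, u)"

text \<open>Events: (w, s) means that at time s points leave vertex w, one along each
  incident edge (either the start at the source X0 at time 0, or some point arrives at w
  at time s; at a valence-one vertex this is the reflection).\<close>

inductive_set events ::
  "'e set \<Rightarrow> ('e \<Rightarrow> 'v \<times> 'v) \<Rightarrow> ('e \<Rightarrow> real) \<Rightarrow> 'v \<Rightarrow> ('v \<times> real) set"
  for E endpts len X0 where
  start: "(X0, 0) \<in> events E endpts len X0"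
| step: "(u, s) \<in> events E endpts len X0 \<Longrightarrow> e \<in> E \<Longrightarrow> incident endpts e u w
         \<Longrightarrow> (w, s + len e) \<in> events E endpts len X0"

definition valence :: "'e set \<Rightarrow> ('e \<Rightarrow> 'v \<times> 'v) \<Rightarrow> 'v \<Rightarrow> nat" where
  "valence E endpts w = card {e \<in> E. \<exists>u. incident endpts e u w}"

definition arrivals ::
  "'e set \<Rightarrow> ('e \<Rightarrow> 'v \<times> 'v) \<Rightarrow> ('e \<Rightarrow> real) \<Rightarrow> 'v \<Rightarrow> 'v \<Rightarrow> real \<Rightarrow> nat" where
  "arrivals E endpts len X0 w \<tau> =
     card {e \<in> E. \<exists>u. incident endpts e u w \<and> (u, \<tau> - len e) \<in> events E endpts len X0}"

definition born ::
  "'e set \<Rightarrow> ('e \<Rightarrow> 'v \<times> 'v) \<Rightarrow> ('e \<Rightarrow> real) \<Rightarrow> 'v \<Rightarrow> 'v \<Rightarrow> real \<Rightarrow> nat" where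
  "born E endpts len X0 w \<tau> = valence E endpts w - arrivals E endpts len X0 w \<tau>"

text \<open>N(Gamma, X0, X, T): total number of new points born at X up to time T
  (inclusive) when the process starts at X0.\<close>
definition Nborn ::
  "'e set \<Rightarrow> ('e \<Rightarrow> 'v \<times> 'v) \<Rightarrow> ('e \<Rightarrow> real) \<Rightarrow> 'v \<Rightarrow> 'v \<Rightarrow> real \<Rightarrow> nat" where
  "Nborn E endpts len X0 X T =
     (\<Sum>\<tau> \<in> {\<tau>. (X, \<tau>) \<in> events E endpts len X0 \<and> \<tau> \<le> T}. born E endpts len X0 X \<tau>)"

datatype HV = HA | HB | HL1 | HL2 | HL4 | HL5

definition H_edges :: "nat set" where "H_edges = {1, 2, 3, 4, 5}"

definition H_endpts :: "nat \<Rightarrow> HV \<times> HV" where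
  "H_endpts e = (if e = 1 then (HA, HL1) else if e = 2 then (HA, HL2)
                 else if e = 3 then (HA, HB) else if e = 4 then (HB, HL4) else (HB, HL5))"

definition lattice_count :: "real list \<Rightarrow> real \<Rightarrow> nat" where
  "lattice_count cs R = card {ns :: nat list. length ns = length cs \<and>
      (\<Sum>i<length cs. 2 * real (ns ! i) * cs ! i) \<le> R}"

end

theory Submission
  imports Defs
begin


abbreviation EV :: "(nat \<Rightarrow> real) \<Rightarrow> (HV \<times> real) set" where
  "EV t \<equiv> events H_edges H_endpts t HA"

definition cnd :: "HV \<Rightarrow> nat \<Rightarrow> nat \<Rightarrow> nat \<Rightarrow> nat \<Rightarrow> nat \<Rightarrow> bool" where
"cnd v c1 c2 c3 c4 c5 = (case v of
  HA \<Rightarrow> even c1 \<and> even c2 \<and> even c3 \<and> even c4 \<and> even c5 \<and> (c3 \<ge> 2 \<or> c4 = 0 \<and> c5 = 0)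
| HL1 \<Rightarrow> odd c1 \<and> even c2 \<and> even c3 \<and> even c4 \<and> even c5 \<and> (c3 \<ge> 2 \<or> c4 = 0 \<and> c5 = 0)
| HL2 \<Rightarrow> even c1 \<and> odd c2 \<and> even c3 \<and> even c4 \<and> even c5 \<and> (c3 \<ge> 2 \<or> c4 = 0 \<and> c5 = 0)
| HB \<Rightarrow> even c1 \<and> even c2 \<and> odd c3 \<and> even c4 \<and> even c5
| HL4 \<Rightarrow> even c1 \<and> even c2 \<and> odd c3 \<and> odd c4 \<and> even c5
| HL5 \<Rightarrow> even c1 \<and> even c2 \<and> odd c3 \<and> even c4 \<and> odd c5)"

definition tm :: "(nat \<Rightarrow> real) \<Rightarrow> nat \<Rightarrow> nat \<Rightarrow> nat \<Rightarrow> nat \<Rightarrow> nat \<Rightarrow> real" where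
  "tm t c1 c2 c3 c4 c5 = real c1 * t 1 + real c2 * t 2 + real c3 * t 3 + real c4 * t 4 + real c5 * t 5"

definition good :: "(nat \<Rightarrow> real) \<Rightarrow> HV \<Rightarrow> real \<Rightarrow> bool" where
  "good t v s = (\<exists>c1 c2 c3 c4 c5. s = tm t c1 c2 c3 c4 c5 \<and> cnd v c1 c2 c3 c4 c5)"

lemma good1: "good t v s \<Longrightarrow> (\<And>c1 c2 c3 c4 c5. cnd v c1 c2 c3 c4 c5 \<Longrightarrow> cnd w (Suc c1) c2 c3 c4 c5) \<Longrightarrow> good t w (s + t 1)"
proof -
  assume g: "good t v s" and h: "\<And>c1 c2 c3 c4 c5. cnd v c1 c2 c3 c4 c5 \<Longrightarrow> cnd w (Suc c1) c2 c3 c4 c5"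
  from g obtain c1 c2 c3 c4 c5 where s: "s = tm t c1 c2 c3 c4 c5" and c: "cnd v c1 c2 c3 c4 c5" unfolding good_def by blast
  have "s + t 1 = tm t (Suc c1) c2 c3 c4 c5" unfolding s tm_def by (simp add: algebra_simps)
  then show ?thesis unfolding good_def using h[OF c] by blast
qed

lemma good2: "good t v s \<Longrightarrow> (\<And>c1 c2 c3 c4 c5. cnd v c1 c2 c3 c4 c5 \<Longrightarrow> cnd w c1 (Suc c2) c3 c4 c5) \<Longrightarrow> good t w (s + t 2)"
proof -
  assume g: "good t v s" and h: "\<And>c1 c2 c3 c4 c5. cnd v c1 c2 c3 c4 c5 \<Longrightarrow> cnd w c1 (Suc c2) c3 c4 c5"
  from g obtain c1 c2 c3 c4 c5 where s: "s = tm t c1 c2 c3 c4 c5" and c: "cnd v c1 c2 c3 c4 c5" unfolding good_def by blast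
  have "s + t 2 = tm t c1 (Suc c2) c3 c4 c5" unfolding s tm_def by (simp add: algebra_simps)
  then show ?thesis unfolding good_def using h[OF c] by blast
qed

lemma good3: "good t v s \<Longrightarrow> (\<And>c1 c2 c3 c4 c5. cnd v c1 c2 c3 c4 c5 \<Longrightarrow> cnd w c1 c2 (Suc c3) c4 c5) \<Longrightarrow> good t w (s + t 3)"
proof -
  assume g: "good t v s" and h: "\<And>c1 c2 c3 c4 c5. cnd v c1 c2 c3 c4 c5 \<Longrightarrow> cnd w c1 c2 (Suc c3) c4 c5"
  from g obtain c1 c2 c3 c4 c5 where s: "s = tm t c1 c2 c3 c4 c5" and c: "cnd v c1 c2 c3 c4 c5" unfolding good_def by blast
  have "s + t 3 = tm t c1 c2 (Suc c3) c4 c5" unfolding s tm_def by (simp add: algebra_simps)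
  then show ?thesis unfolding good_def using h[OF c] by blast
qed

lemma good4: "good t v s \<Longrightarrow> (\<And>c1 c2 c3 c4 c5. cnd v c1 c2 c3 c4 c5 \<Longrightarrow> cnd w c1 c2 c3 (Suc c4) c5) \<Longrightarrow> good t w (s + t 4)"
proof -
  assume g: "good t v s" and h: "\<And>c1 c2 c3 c4 c5. cnd v c1 c2 c3 c4 c5 \<Longrightarrow> cnd w c1 c2 c3 (Suc c4) c5"
  from g obtain c1 c2 c3 c4 c5 where s: "s = tm t c1 c2 c3 c4 c5" and c: "cnd v c1 c2 c3 c4 c5" unfolding good_def by blast
  have "s + t 4 = tm t c1 c2 c3 (Suc c4) c5" unfolding s tm_def by (simp add: algebra_simps)
  then show ?thesis unfolding good_def using h[OF c] by blast
qed

lemma good5: "good t v s \<Longrightarrow> (\<And>c1 c2 c3 c4 c5. cnd v c1 c2 c3 c4 c5 \<Longrightarrow> cnd w c1 c2 c3 c4 (Suc c5)) \<Longrightarrow> good t w (s + t 5)"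
proof -
  assume g: "good t v s" and h: "\<And>c1 c2 c3 c4 c5. cnd v c1 c2 c3 c4 c5 \<Longrightarrow> cnd w c1 c2 c3 c4 (Suc c5)"
  from g obtain c1 c2 c3 c4 c5 where s: "s = tm t c1 c2 c3 c4 c5" and c: "cnd v c1 c2 c3 c4 c5" unfolding good_def by blast
  have "s + t 5 = tm t c1 c2 c3 c4 (Suc c5)" unfolding s tm_def by (simp add: algebra_simps)
  then show ?thesis unfolding good_def using h[OF c] by blast
qed


lemma good_events: "(v,s) \<in> EV t \<Longrightarrow> good t v s"
proof (induction rule: events.induct)
  case start
  show ?case unfolding good_def by (rule exI[of _ 0])+ (simp add: tm_def cnd_def)
next
  case (step u s e w)
  have e: "e = 1 \<or> e = 2 \<or> e = 3 \<or> e = 4 \<or> e = 5" using step.hyps(2) by (auto simp: H_edges_def)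
  then show ?case
  proof (elim disjE)
    assume ee: "e = 1"
    have "u = HA \<and> w = HL1 \<or> u = HL1 \<and> w = HA" using step.hyps(3) ee by (auto simp: incident_def H_endpts_def)
    then show ?thesis using step.IH unfolding ee apply - by (elim disjE conjE; hypsubst; erule good1; simp add: cnd_def)
  next
    assume ee: "e = 2"
    have "u = HA \<and> w = HL2 \<or> u = HL2 \<and> w = HA" using step.hyps(3) ee by (auto simp: incident_def H_endpts_def)
    then show ?thesis using step.IH unfolding ee apply - by (elim disjE conjE; hypsubst; erule good2; simp add: cnd_def)
  next
    assume ee: "e = 3"
    have "u = HA \<and> w = HB \<or> u = HB \<and> w = HA" using step.hyps(3) ee by (auto simp: incident_def H_endpts_def)
    then show ?thesis using step.IH unfolding ee apply - by (elim disjE conjE; hypsubst; erule good3; auto simp add: cnd_def Suc_le_eq odd_pos)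
  next
    assume ee: "e = 4"
    have "u = HB \<and> w = HL4 \<or> u = HL4 \<and> w = HB" using step.hyps(3) ee by (auto simp: incident_def H_endpts_def)
    then show ?thesis using step.IH unfolding ee apply - by (elim disjE conjE; hypsubst; erule good4; simp add: cnd_def)
  next
    assume ee: "e = 5"
    have "u = HB \<and> w = HL5 \<or> u = HL5 \<and> w = HB" using step.hyps(3) ee by (auto simp: incident_def H_endpts_def)
    then show ?thesis using step.IH unfolding ee apply - by (elim disjE conjE; hypsubst; erule good5; simp add: cnd_def)
  qed
qed



definition LI :: "(nat \<Rightarrow> real) \<Rightarrow> bool" where
  "LI t = (\<forall>q :: nat \<Rightarrow> rat.
        (\<Sum>i\<in>{1..5}. real_of_rat (q i) * t i) = 0 \<longrightarrow> (\<forall>i\<in>{1..5}. q i = 0))"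

lemma uniq:
  assumes li: "LI t" and eq: "tm t a1 a2 a3 a4 a5 = tm t b1 b2 b3 b4 b5"
  shows "a1 = b1 \<and> a2 = b2 \<and> a3 = b3 \<and> a4 = b4 \<and> a5 = b5"
proof -
  define q :: "nat \<Rightarrow> rat" where "q i = (if i = 1 then of_nat a1 - of_nat b1 else if i = 2 then of_nat a2 - of_nat b2
     else if i = 3 then of_nat a3 - of_nat b3 else if i = 4 then of_nat a4 - of_nat b4 else of_nat a5 - of_nat b5)" for i
  have s: "{1..5::nat} = {1,2,3,4,5}" by auto
  have "(\<Sum>i\<in>{1..5}. real_of_rat (q i) * t i) = tm t a1 a2 a3 a4 a5 - tm t b1 b2 b3 b4 b5"
    unfolding s q_def tm_def by (simp add: of_rat_diff algebra_simps)
  also have "\<dots> = 0" using eq by simp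
  finally have "\<forall>i\<in>{1..5}. q i = 0" using li unfolding LI_def by blast
  then have "q 1 = 0" "q 2 = 0" "q 3 = 0" "q 4 = 0" "q 5 = 0" by auto
  then show ?thesis unfolding q_def by simp
qed

lemma ev_step: "(u,s) \<in> EV t \<Longrightarrow> e \<in> H_edges \<Longrightarrow> incident H_endpts e u w \<Longrightarrow> (w, s + t e) \<in> EV t"
  by (rule events.step)

lemma loopA1: "(HA,s) \<in> EV t \<Longrightarrow> (HA, s + 2 * t 1) \<in> EV t"
proof -
  assume "(HA,s) \<in> EV t"
  then have "(HL1, s + t 1) \<in> EV t" by (rule ev_step) (auto simp: H_edges_def incident_def H_endpts_def)
  then have "(HA, s + t 1 + t 1) \<in> EV t" by (rule ev_step) (auto simp: H_edges_def incident_def H_endpts_def)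
  then show ?thesis by (simp add: algebra_simps)
qed

lemma loopA2: "(HA,s) \<in> EV t \<Longrightarrow> (HA, s + 2 * t 2) \<in> EV t"
proof -
  assume "(HA,s) \<in> EV t"
  then have "(HL2, s + t 2) \<in> EV t" by (rule ev_step) (auto simp: H_edges_def incident_def H_endpts_def)
  then have "(HA, s + t 2 + t 2) \<in> EV t" by (rule ev_step) (auto simp: H_edges_def incident_def H_endpts_def)
  then show ?thesis by (simp add: algebra_simps)
qed

lemma AB: "(HA,s) \<in> EV t \<Longrightarrow> (HB, s + t 3) \<in> EV t"
  by (rule ev_step) (auto simp: H_edges_def incident_def H_endpts_def)

lemma BA: "(HB,s) \<in> EV t \<Longrightarrow> (HA, s + t 3) \<in> EV t"
  by (rule ev_step) (auto simp: H_edges_def incident_def H_endpts_def)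

lemma B4: "(HB,s) \<in> EV t \<Longrightarrow> (HL4, s + t 4) \<in> EV t"
  by (rule ev_step) (auto simp: H_edges_def incident_def H_endpts_def)

lemma B5: "(HB,s) \<in> EV t \<Longrightarrow> (HL5, s + t 5) \<in> EV t"
  by (rule ev_step) (auto simp: H_edges_def incident_def H_endpts_def)

lemma loopA3: "(HA,s) \<in> EV t \<Longrightarrow> (HA, s + 2 * t 3) \<in> EV t"
proof -
  assume "(HA,s) \<in> EV t"
  then have "(HA, s + t 3 + t 3) \<in> EV t" by (intro BA AB)
  then show ?thesis by (simp add: algebra_simps)
qed

lemma loopB3: "(HB,s) \<in> EV t \<Longrightarrow> (HB, s + 2 * t 3) \<in> EV t"
proof -
  assume "(HB,s) \<in> EV t"
  then have "(HB, s + t 3 + t 3) \<in> EV t" by (intro BA AB)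
  then show ?thesis by (simp add: algebra_simps)
qed

lemma loopB4: "(HB,s) \<in> EV t \<Longrightarrow> (HB, s + 2 * t 4) \<in> EV t"
proof -
  assume "(HB,s) \<in> EV t"
  then have "(HL4, s + t 4) \<in> EV t" by (rule B4)
  then have "(HB, s + t 4 + t 4) \<in> EV t" by (rule ev_step) (auto simp: H_edges_def incident_def H_endpts_def)
  then show ?thesis by (simp add: algebra_simps)
qed

lemma loopB5: "(HB,s) \<in> EV t \<Longrightarrow> (HB, s + 2 * t 5) \<in> EV t"
proof -
  assume "(HB,s) \<in> EV t"
  then have "(HL5, s + t 5) \<in> EV t" by (rule B5)
  then have "(HB, s + t 5 + t 5) \<in> EV t" by (rule ev_step) (auto simp: H_edges_def incident_def H_endpts_def)
  then show ?thesis by (simp add: algebra_simps)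
qed

lemma iter: "(v,s) \<in> EV t \<Longrightarrow> (\<And>s. (v,s) \<in> EV t \<Longrightarrow> (v, s + d) \<in> EV t) \<Longrightarrow> (v, s + real n * d) \<in> EV t"
proof (induction n)
  case 0 then show ?case by simp
next
  case (Suc n)
  then have "(v, s + real n * d + d) \<in> EV t" by blast
  then show ?case by (simp add: algebra_simps)
qed

lemma A0: "(HA, tm t (2*a) (2*b) (2*k) 0 0) \<in> EV t"
proof -
  have "(HA, 0) \<in> EV t" by (rule events.start)
  then have "(HA, 0 + real a * (2 * t 1)) \<in> EV t" by (rule iter) (erule loopA1)
  then have "(HA, 0 + real a * (2 * t 1) + real b * (2 * t 2)) \<in> EV t" by (rule iter) (erule loopA2)
  then have "(HA, 0 + real a * (2 * t 1) + real b * (2 * t 2) + real k * (2 * t 3)) \<in> EV t" by (rule iter) (erule loopA3)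
  then show ?thesis by (simp add: tm_def algebra_simps)
qed

lemma B0: "(HB, tm t (2*a) (2*b) (2*k+1) (2*c) (2*d)) \<in> EV t"
proof -
  have "(HB, tm t (2*a) (2*b) (2*k) 0 0 + t 3) \<in> EV t" by (rule AB[OF A0])
  then have "(HB, tm t (2*a) (2*b) (2*k) 0 0 + t 3 + real c * (2 * t 4)) \<in> EV t" by (rule iter) (erule loopB4)
  then have "(HB, tm t (2*a) (2*b) (2*k) 0 0 + t 3 + real c * (2 * t 4) + real d * (2 * t 5)) \<in> EV t" by (rule iter) (erule loopB5)
  then show ?thesis by (simp add: tm_def algebra_simps)
qed

lemma B_char: "(HB, s) \<in> EV t \<longleftrightarrow> (\<exists>k a b c d. s = tm t (2*a) (2*b) (2*k+1) (2*c) (2*d))"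
proof
  assume "(HB, s) \<in> EV t"
  then have "good t HB s" by (rule good_events)
  then obtain c1 c2 c3 c4 c5 where s: "s = tm t c1 c2 c3 c4 c5" and c: "cnd HB c1 c2 c3 c4 c5"
    unfolding good_def by blast
  from c have "even c1" "even c2" "odd c3" "even c4" "even c5" by (auto simp: cnd_def)
  then obtain a b k c d where "c1 = 2*a" "c2 = 2*b" "c3 = 2*k+1" "c4 = 2*c" "c5 = 2*d"
    by (metis evenE oddE)
  then show "\<exists>k a b c d. s = tm t (2*a) (2*b) (2*k+1) (2*c) (2*d)" using s by blast
next
  assume "\<exists>k a b c d. s = tm t (2*a) (2*b) (2*k+1) (2*c) (2*d)"
  then show "(HB, s) \<in> EV t" using B0 by blast
qed

lemma A_arr:
  assumes li: "LI t"
  shows "(HA, tm t (2*a) (2*b) (2*k+1) (2*c) (2*d) - t 3) \<in> EV t \<longleftrightarrow> (k \<ge> 1 \<or> c = 0 \<and> d = 0)"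
proof
  assume "(HA, tm t (2*a) (2*b) (2*k+1) (2*c) (2*d) - t 3) \<in> EV t"
  then have "good t HA (tm t (2*a) (2*b) (2*k+1) (2*c) (2*d) - t 3)" by (rule good_events)
  then obtain c1 c2 c3 c4 c5 where s: "tm t (2*a) (2*b) (2*k+1) (2*c) (2*d) - t 3 = tm t c1 c2 c3 c4 c5" and cc: "cnd HA c1 c2 c3 c4 c5"
    unfolding good_def by blast
  from s have "tm t (2*a) (2*b) (2*k+1) (2*c) (2*d) = tm t c1 c2 (Suc c3) c4 c5" by (simp add: tm_def algebra_simps)
  from uniq[OF li this] have "2*k+1 = Suc c3" "2*c = c4" "2*d = c5" by auto
  with cc show "k \<ge> 1 \<or> c = 0 \<and> d = 0" by (auto simp: cnd_def)
next
  assume h: "k \<ge> 1 \<or> c = 0 \<and> d = 0"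
  then show "(HA, tm t (2*a) (2*b) (2*k+1) (2*c) (2*d) - t 3) \<in> EV t"
  proof
    assume "k \<ge> 1"
    then obtain j where k: "k = Suc j" by (cases k) auto
    have "(HA, tm t (2*a) (2*b) (2*j+1) (2*c) (2*d) + t 3) \<in> EV t" by (rule BA[OF B0])
    moreover have "tm t (2*a) (2*b) (2*j+1) (2*c) (2*d) + t 3 = tm t (2*a) (2*b) (2*k+1) (2*c) (2*d) - t 3"
      unfolding k tm_def by (simp add: algebra_simps)
    ultimately show ?thesis by metis
  next
    assume "c = 0 \<and> d = 0"
    moreover have "tm t (2*a) (2*b) (2*k) 0 0 = tm t (2*a) (2*b) (2*k+1) 0 0 - t 3"
      unfolding tm_def by (simp add: algebra_simps)
    ultimately show ?thesis using A0[of t a b k] by (metis mult_0_right)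
  qed
qed

lemma L4_arr:
  assumes li: "LI t"
  shows "(HL4, tm t (2*a) (2*b) (2*k+1) (2*c) (2*d) - t 4) \<in> EV t \<longleftrightarrow> c \<ge> 1"
proof
  assume "(HL4, tm t (2*a) (2*b) (2*k+1) (2*c) (2*d) - t 4) \<in> EV t"
  then have "good t HL4 (tm t (2*a) (2*b) (2*k+1) (2*c) (2*d) - t 4)" by (rule good_events)
  then obtain c1 c2 c3 c4 c5 where s: "tm t (2*a) (2*b) (2*k+1) (2*c) (2*d) - t 4 = tm t c1 c2 c3 c4 c5" and cc: "cnd HL4 c1 c2 c3 c4 c5"
    unfolding good_def by blast
  from s have "tm t (2*a) (2*b) (2*k+1) (2*c) (2*d) = tm t c1 c2 c3 (Suc c4) c5" by (simp add: tm_def algebra_simps)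
  from uniq[OF li this] have "2*c = Suc c4" by auto
  then show "c \<ge> 1" by simp
next
  assume "c \<ge> 1"
  then obtain j where k: "c = Suc j" by (cases c) auto
  have "(HL4, tm t (2*a) (2*b) (2*k+1) (2*j) (2*d) + t 4) \<in> EV t" by (rule B4[OF B0])
  moreover have "tm t (2*a) (2*b) (2*k+1) (2*j) (2*d) + t 4 = tm t (2*a) (2*b) (2*k+1) (2*c) (2*d) - t 4"
    unfolding k tm_def by (simp add: algebra_simps)
  ultimately show "(HL4, tm t (2*a) (2*b) (2*k+1) (2*c) (2*d) - t 4) \<in> EV t" by metis
qed

lemma L5_arr:
  assumes li: "LI t"
  shows "(HL5, tm t (2*a) (2*b) (2*k+1) (2*c) (2*d) - t 5) \<in> EV t \<longleftrightarrow> d \<ge> 1"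
proof
  assume "(HL5, tm t (2*a) (2*b) (2*k+1) (2*c) (2*d) - t 5) \<in> EV t"
  then have "good t HL5 (tm t (2*a) (2*b) (2*k+1) (2*c) (2*d) - t 5)" by (rule good_events)
  then obtain c1 c2 c3 c4 c5 where s: "tm t (2*a) (2*b) (2*k+1) (2*c) (2*d) - t 5 = tm t c1 c2 c3 c4 c5" and cc: "cnd HL5 c1 c2 c3 c4 c5"
    unfolding good_def by blast
  from s have "tm t (2*a) (2*b) (2*k+1) (2*c) (2*d) = tm t c1 c2 c3 c4 (Suc c5)" by (simp add: tm_def algebra_simps)
  from uniq[OF li this] have "2*d = Suc c5" by auto
  then show "d \<ge> 1" by simp
next
  assume "d \<ge> 1"
  then obtain j where k: "d = Suc j" by (cases d) auto
  have "(HL5, tm t (2*a) (2*b) (2*k+1) (2*c) (2*j) + t 5) \<in> EV t" by (rule B5[OF B0])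
  moreover have "tm t (2*a) (2*b) (2*k+1) (2*c) (2*j) + t 5 = tm t (2*a) (2*b) (2*k+1) (2*c) (2*d) - t 5"
    unfolding k tm_def by (simp add: algebra_simps)
  ultimately show "(HL5, tm t (2*a) (2*b) (2*k+1) (2*c) (2*d) - t 5) \<in> EV t" by metis
qed



definition bt :: "(nat \<Rightarrow> real) \<Rightarrow> nat \<times> nat \<times> nat \<times> nat \<times> nat \<Rightarrow> real" where
  "bt t x = (case x of (k,a,b,c,d) \<Rightarrow> tm t (2*a) (2*b) (2*k+1) (2*c) (2*d))"

lemma bt_eq: "bt t (k,a,b,c,d) = t 3 + (2*real a*t 1 + 2*real b*t 2 + 2*real k*t 3 + 2*real c*t 4 + 2*real d*t 5)"
  by (simp add: bt_def tm_def algebra_simps)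

lemma inc_HB: "e \<in> H_edges \<Longrightarrow> (\<exists>u. incident H_endpts e u HB \<and> P e u) \<longleftrightarrow> (e=3 \<and> P 3 HA \<or> e=4 \<and> P 4 HL4 \<or> e=5 \<and> P 5 HL5)"
  by (auto simp: H_edges_def incident_def H_endpts_def)

lemma card3: "card {e\<in>H_edges. e=3 \<and> A \<or> e=4 \<and> B \<or> e=5 \<and> C} = of_bool A + of_bool B + of_bool C"
proof -
  have "{e\<in>H_edges. e=3 \<and> A \<or> e=4 \<and> B \<or> e=5 \<and> C} = (if A then {3} else {}) \<union> (if B then {4} else {}) \<union> (if C then {5} else {})"
    by (auto simp: H_edges_def)
  then show ?thesis by (cases A; cases B; cases C) auto
qed

lemma valHB: "valence H_edges H_endpts HB = 3"
proof -
  have "{e \<in> H_edges. \<exists>u. incident H_endpts e u HB} = {e\<in>H_edges. e=3 \<and> True \<or> e=4 \<and> True \<or> e=5 \<and> True}"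
    using inc_HB[where P="\<lambda>_ _. True"] by auto
  then show ?thesis unfolding valence_def using card3[of True True True] by simp
qed

lemma arrHB:
  assumes li: "LI t"
  shows "arrivals H_edges H_endpts t HA HB (bt t (k,a,b,c,d)) = of_bool (k \<ge> 1 \<or> c = 0 \<and> d = 0) + of_bool (c \<ge> 1) + of_bool (d \<ge> 1)"
proof -
  let ?s = "bt t (k,a,b,c,d)"
  have "{e \<in> H_edges. \<exists>u. incident H_endpts e u HB \<and> (u, ?s - t e) \<in> EV t}
     = {e\<in>H_edges. e=3 \<and> (HA, ?s - t 3) \<in> EV t \<or> e=4 \<and> (HL4, ?s - t 4) \<in> EV t \<or> e=5 \<and> (HL5, ?s - t 5) \<in> EV t}"
    using inc_HB[where P="\<lambda>e u. (u, ?s - t e) \<in> EV t"] by auto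
  also have "\<dots> = {e\<in>H_edges. e=3 \<and> (k \<ge> 1 \<or> c = 0 \<and> d = 0) \<or> e=4 \<and> c \<ge> 1 \<or> e=5 \<and> d \<ge> 1}"
    unfolding bt_def using A_arr[OF li] L4_arr[OF li] L5_arr[OF li] by simp
  finally show ?thesis unfolding arrivals_def by (simp only: card3)
qed

lemma bornHB:
  assumes li: "LI t"
  shows "int (born H_edges H_endpts t HA HB (bt t (k,a,b,c,d))) =
     of_bool (d = 0) + of_bool (c = 0) + of_bool (k = 0) - of_bool (k = 0 \<and> c = 0 \<and> d = 0)"
  unfolding born_def valHB arrHB[OF li] by auto

lemma bnd: "0 < s \<Longrightarrow> real n * s \<le> T \<Longrightarrow> n \<le> nat \<lceil>T/s\<rceil>"
proof -
  assume "0 < s" "real n * s \<le> T"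
  then have "real n \<le> T/s" by (simp add: pos_le_divide_eq)
  also have "\<dots> \<le> real (nat \<lceil>T/s\<rceil>)" by (rule real_nat_ceiling_ge)
  finally show ?thesis by simp
qed

lemma finQ:
  assumes pos: "\<forall>i\<in>{1..5}. t i > 0"
  shows "finite {x. bt t x \<le> T}"
proof -
  have p: "t 1 > 0" "t 2 > 0" "t 3 > 0" "t 4 > 0" "t 5 > 0" using pos by auto
  have "{x. bt t x \<le> T} \<subseteq> {..nat \<lceil>T/t 3\<rceil>} \<times> {..nat \<lceil>T/t 1\<rceil>} \<times> {..nat \<lceil>T/t 2\<rceil>} \<times> {..nat \<lceil>T/t 4\<rceil>} \<times> {..nat \<lceil>T/t 5\<rceil>}"
  proof (rule subsetI)
    fix x assume "x \<in> {x. bt t x \<le> T}"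
    moreover obtain k a b c d where x: "x = (k,a,b,c,d)" by (cases x)
    ultimately have h: "bt t (k,a,b,c,d) \<le> T" by simp
    have n: "0 \<le> real a * t 1" "0 \<le> real b * t 2" "0 \<le> real k * t 3" "0 \<le> real c * t 4" "0 \<le> real d * t 5"
      using p by auto
    from h have h': "t 3 + (2*real a*t 1 + 2*real b*t 2 + 2*real k*t 3 + 2*real c*t 4 + 2*real d*t 5) \<le> T"
      by (simp add: bt_eq)
    have "real k * t 3 \<le> T" "real a * t 1 \<le> T" "real b * t 2 \<le> T" "real c * t 4 \<le> T" "real d * t 5 \<le> T"
      using h' n p by linarith+
    then have "k \<le> nat \<lceil>T/t 3\<rceil> \<and> a \<le> nat \<lceil>T/t 1\<rceil> \<and> b \<le> nat \<lceil>T/t 2\<rceil> \<and> c \<le> nat \<lceil>T/t 4\<rceil> \<and> d \<le> nat \<lceil>T/t 5\<rceil>"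
      using p bnd by blast
    then show "x \<in> {..nat \<lceil>T/t 3\<rceil>} \<times> {..nat \<lceil>T/t 1\<rceil>} \<times> {..nat \<lceil>T/t 2\<rceil>} \<times> {..nat \<lceil>T/t 4\<rceil>} \<times> {..nat \<lceil>T/t 5\<rceil>}"
      by (simp add: x)
  qed
  then show ?thesis by (rule finite_subset) auto
qed

lemma len4: "length ns = 4 \<Longrightarrow> \<exists>a b c d. ns = [a,b,c,d]"
  by (auto simp: length_Suc_conv numeral_eq_Suc)
lemma len2: "length ns = 2 \<Longrightarrow> \<exists>a b. ns = [a,b]"
  by (auto simp: length_Suc_conv numeral_eq_Suc)

lemma sum4: "(\<Sum>i<4::nat. f i) = f 0 + f 1 + f 2 + (f 3 :: real)"
  by (simp add: numeral_eq_Suc)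
lemma sum2: "(\<Sum>i<2::nat. f i) = f 0 + (f 1 :: real)"
  by (simp add: numeral_eq_Suc)



lemma lc1: "lattice_count [t 1, t 2, t 3, t 4] (T - t 3) = card ({x. bt t x \<le> T} \<inter> {x. case x of (k,a,b,c,d) \<Rightarrow> d = 0})"
proof -
  let ?f = "\<lambda>(k::nat,a::nat,b::nat,c::nat,d::nat). [a,b,k,c]"
  have "{ns :: nat list. length ns = length [t 1, t 2, t 3, t 4] \<and>
      (\<Sum>i<length [t 1, t 2, t 3, t 4]. 2 * real (ns ! i) * [t 1, t 2, t 3, t 4] ! i) \<le> T - t 3}
     = ?f ` ({x. bt t x \<le> T} \<inter> {x. case x of (k,a,b,c,d) \<Rightarrow> d = 0})"
  proof (rule set_eqI, rule iffI)
    fix ns assume h: "ns \<in> {ns :: nat list. length ns = length [t 1, t 2, t 3, t 4] \<and>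
      (\<Sum>i<length [t 1, t 2, t 3, t 4]. 2 * real (ns ! i) * [t 1, t 2, t 3, t 4] ! i) \<le> T - t 3}"
    then have "length ns = 4" by simp
    then obtain a b k c where ns: "ns = [a,b,k,c]" using len4 by blast
    from h have "bt t (k,a,b,c,0) \<le> T" by (simp add: ns sum4 bt_eq)
    then show "ns \<in> ?f ` ({x. bt t x \<le> T} \<inter> {x. case x of (k,a,b,c,d) \<Rightarrow> d = 0})"
      unfolding ns by (auto intro!: image_eqI[where x="(k,a,b,c,0)"])
  next
    fix ns assume "ns \<in> ?f ` ({x. bt t x \<le> T} \<inter> {x. case x of (k,a,b,c,d) \<Rightarrow> d = 0})"
    then obtain k a b c d where "ns = [a,b,k,c]" "d = 0" "bt t (k,a,b,c,d) \<le> T" by auto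
    then show "ns \<in> {ns :: nat list. length ns = length [t 1, t 2, t 3, t 4] \<and>
      (\<Sum>i<length [t 1, t 2, t 3, t 4]. 2 * real (ns ! i) * [t 1, t 2, t 3, t 4] ! i) \<le> T - t 3}"
      by (simp add: sum4 bt_eq)
  qed
  moreover have "inj_on ?f ({x. bt t x \<le> T} \<inter> {x. case x of (k,a,b,c,d) \<Rightarrow> d = 0})"
    by (auto simp: inj_on_def)
  ultimately show ?thesis unfolding lattice_count_def by (simp add: card_image)
qed

lemma lc2: "lattice_count [t 1, t 2, t 3, t 5] (T - t 3) = card ({x. bt t x \<le> T} \<inter> {x. case x of (k,a,b,c,d) \<Rightarrow> c = 0})"
proof -
  let ?f = "\<lambda>(k::nat,a::nat,b::nat,c::nat,d::nat). [a,b,k,d]"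
  have "{ns :: nat list. length ns = length [t 1, t 2, t 3, t 5] \<and>
      (\<Sum>i<length [t 1, t 2, t 3, t 5]. 2 * real (ns ! i) * [t 1, t 2, t 3, t 5] ! i) \<le> T - t 3}
     = ?f ` ({x. bt t x \<le> T} \<inter> {x. case x of (k,a,b,c,d) \<Rightarrow> c = 0})"
  proof (rule set_eqI, rule iffI)
    fix ns assume h: "ns \<in> {ns :: nat list. length ns = length [t 1, t 2, t 3, t 5] \<and>
      (\<Sum>i<length [t 1, t 2, t 3, t 5]. 2 * real (ns ! i) * [t 1, t 2, t 3, t 5] ! i) \<le> T - t 3}"
    then have "length ns = 4" by simp
    then obtain a b k d where ns: "ns = [a,b,k,d]" using len4 by blast
    from h have "bt t (k,a,b,0,d) \<le> T" by (simp add: ns sum4 bt_eq)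
    then show "ns \<in> ?f ` ({x. bt t x \<le> T} \<inter> {x. case x of (k,a,b,c,d) \<Rightarrow> c = 0})"
      unfolding ns by (auto intro!: image_eqI[where x="(k,a,b,0,d)"])
  next
    fix ns assume "ns \<in> ?f ` ({x. bt t x \<le> T} \<inter> {x. case x of (k,a,b,c,d) \<Rightarrow> c = 0})"
    then obtain k a b c d where "ns = [a,b,k,d]" "c = 0" "bt t (k,a,b,c,d) \<le> T" by auto
    then show "ns \<in> {ns :: nat list. length ns = length [t 1, t 2, t 3, t 5] \<and>
      (\<Sum>i<length [t 1, t 2, t 3, t 5]. 2 * real (ns ! i) * [t 1, t 2, t 3, t 5] ! i) \<le> T - t 3}"
      by (simp add: sum4 bt_eq)
  qed
  moreover have "inj_on ?f ({x. bt t x \<le> T} \<inter> {x. case x of (k,a,b,c,d) \<Rightarrow> c = 0})"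
    by (auto simp: inj_on_def)
  ultimately show ?thesis unfolding lattice_count_def by (simp add: card_image)
qed


lemma lc3: "lattice_count [t 1, t 2, t 4, t 5] (T - t 3) = card ({x. bt t x \<le> T} \<inter> {x. case x of (k,a,b,c,d) \<Rightarrow> k = 0})"
proof -
  let ?f = "\<lambda>(k::nat,a::nat,b::nat,c::nat,d::nat). [a,b,c,d]"
  have "{ns :: nat list. length ns = length [t 1, t 2, t 4, t 5] \<and>
      (\<Sum>i<length [t 1, t 2, t 4, t 5]. 2 * real (ns ! i) * [t 1, t 2, t 4, t 5] ! i) \<le> T - t 3}
     = ?f ` ({x. bt t x \<le> T} \<inter> {x. case x of (k,a,b,c,d) \<Rightarrow> k = 0})"
  proof (rule set_eqI, rule iffI)
    fix ns assume h: "ns \<in> {ns :: nat list. length ns = length [t 1, t 2, t 4, t 5] \<and>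
      (\<Sum>i<length [t 1, t 2, t 4, t 5]. 2 * real (ns ! i) * [t 1, t 2, t 4, t 5] ! i) \<le> T - t 3}"
    then have "length ns = 4" by simp
    then obtain a b c d where ns: "ns = [a,b,c,d]" using len4 by blast
    from h have "bt t (0,a,b,c,d) \<le> T" by (simp add: ns sum4 bt_eq)
    then show "ns \<in> ?f ` ({x. bt t x \<le> T} \<inter> {x. case x of (k,a,b,c,d) \<Rightarrow> k = 0})"
      unfolding ns by (auto intro!: image_eqI[where x="(0,a,b,c,d)"])
  next
    fix ns assume "ns \<in> ?f ` ({x. bt t x \<le> T} \<inter> {x. case x of (k,a,b,c,d) \<Rightarrow> k = 0})"
    then obtain k a b c d where "ns = [a,b,c,d]" "k = 0" "bt t (k,a,b,c,d) \<le> T" by auto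
    then show "ns \<in> {ns :: nat list. length ns = length [t 1, t 2, t 4, t 5] \<and>
      (\<Sum>i<length [t 1, t 2, t 4, t 5]. 2 * real (ns ! i) * [t 1, t 2, t 4, t 5] ! i) \<le> T - t 3}"
      by (simp add: sum4 bt_eq)
  qed
  moreover have "inj_on ?f ({x. bt t x \<le> T} \<inter> {x. case x of (k,a,b,c,d) \<Rightarrow> k = 0})"
    by (auto simp: inj_on_def)
  ultimately show ?thesis unfolding lattice_count_def by (simp add: card_image)
qed


lemma lc4: "lattice_count [t 1, t 2] (T - t 3) = card ({x. bt t x \<le> T} \<inter> {x. case x of (k,a,b,c,d) \<Rightarrow> k = 0 \<and> c = 0 \<and> d = 0})"
proof -
  let ?f = "\<lambda>(k::nat,a::nat,b::nat,c::nat,d::nat). [a,b]"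
  have "{ns :: nat list. length ns = length [t 1, t 2] \<and>
      (\<Sum>i<length [t 1, t 2]. 2 * real (ns ! i) * [t 1, t 2] ! i) \<le> T - t 3}
     = ?f ` ({x. bt t x \<le> T} \<inter> {x. case x of (k,a,b,c,d) \<Rightarrow> k = 0 \<and> c = 0 \<and> d = 0})"
  proof (rule set_eqI, rule iffI)
    fix ns assume h: "ns \<in> {ns :: nat list. length ns = length [t 1, t 2] \<and>
      (\<Sum>i<length [t 1, t 2]. 2 * real (ns ! i) * [t 1, t 2] ! i) \<le> T - t 3}"
    then have "length ns = 2" by simp
    then obtain a b where ns: "ns = [a,b]" using len2 by blast
    from h have "bt t (0,a,b,0,0) \<le> T" by (simp add: ns sum2 bt_eq)
    then show "ns \<in> ?f ` ({x. bt t x \<le> T} \<inter> {x. case x of (k,a,b,c,d) \<Rightarrow> k = 0 \<and> c = 0 \<and> d = 0})"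
      unfolding ns by (auto intro!: image_eqI[where x="(0,a,b,0,0)"])
  next
    fix ns assume "ns \<in> ?f ` ({x. bt t x \<le> T} \<inter> {x. case x of (k,a,b,c,d) \<Rightarrow> k = 0 \<and> c = 0 \<and> d = 0})"
    then obtain k a b c d where "ns = [a,b]" "k = 0" "c = 0" "d = 0" "bt t (k,a,b,c,d) \<le> T" by auto
    then show "ns \<in> {ns :: nat list. length ns = length [t 1, t 2] \<and>
      (\<Sum>i<length [t 1, t 2]. 2 * real (ns ! i) * [t 1, t 2] ! i) \<le> T - t 3}"
      by (simp add: sum2 bt_eq)
  qed
  moreover have "inj_on ?f ({x. bt t x \<le> T} \<inter> {x. case x of (k,a,b,c,d) \<Rightarrow> k = 0 \<and> c = 0 \<and> d = 0})"
    by (auto simp: inj_on_def)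
  ultimately show ?thesis unfolding lattice_count_def by (simp add: card_image)
qed




theorem mainTheorem4:
  fixes t :: "nat \<Rightarrow> real" and T :: real
  assumes pos: "\<forall>i\<in>{1..5}. t i > 0"
    and linindep: "\<forall>q :: nat \<Rightarrow> rat.
        (\<Sum>i\<in>{1..5}. real_of_rat (q i) * t i) = 0 \<longrightarrow> (\<forall>i\<in>{1..5}. q i = 0)"
    and T: "T \<ge> 0"
  shows "int (Nborn H_edges H_endpts t HA HB T) =
           int (lattice_count [t 1, t 2, t 3, t 4] (T - t 3))
         + int (lattice_count [t 1, t 2, t 3, t 5] (T - t 3))
         + int (lattice_count [t 1, t 2, t 4, t 5] (T - t 3))
         - int (lattice_count [t 1, t 2] (T - t 3))"
proof -
  have li: "LI t" using linindep unfolding LI_def .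
  define Q where "Q = {x. bt t x \<le> T}"
  have fin: "finite Q" unfolding Q_def using finQ[OF pos] .
  have ev: "{\<tau>. (HB,\<tau>) \<in> EV t \<and> \<tau> \<le> T} = bt t ` Q"
  proof (rule set_eqI, rule iffI)
    fix s assume "s \<in> {\<tau>. (HB,\<tau>) \<in> EV t \<and> \<tau> \<le> T}"
    then obtain k a b c d where "s = tm t (2*a) (2*b) (2*k+1) (2*c) (2*d)" "s \<le> T" by (auto simp: B_char)
    then have "s = bt t (k,a,b,c,d)" "(k,a,b,c,d) \<in> Q" by (auto simp: bt_def Q_def)
    then show "s \<in> bt t ` Q" by blast
  next
    fix s assume "s \<in> bt t ` Q"
    then obtain k a b c d where "s = bt t (k,a,b,c,d)" "(k,a,b,c,d) \<in> Q" by (metis imageE prod_cases5)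
    then show "s \<in> {\<tau>. (HB,\<tau>) \<in> EV t \<and> \<tau> \<le> T}" using B0[of t a b k c d] by (simp add: bt_def Q_def)
  qed
  have inj: "inj_on (bt t) Q"
  proof (rule inj_onI)
    fix x y assume "x \<in> Q" "y \<in> Q" "bt t x = bt t y"
    moreover obtain k a b c d where x: "x = (k,a,b,c,d)" by (metis prod_cases5)
    moreover obtain k' a' b' c' d' where y: "y = (k',a',b',c',d')" by (metis prod_cases5)
    ultimately have "tm t (2*a) (2*b) (2*k+1) (2*c) (2*d) = tm t (2*a') (2*b') (2*k'+1) (2*c') (2*d')"
      by (simp add: bt_def)
    from uniq[OF li this] show "x = y" by (simp add: x y)
  qed
  define P1 where "P1 x = (case x of (k,a,b,c,d) \<Rightarrow> d = 0)" for x :: "nat \<times> nat \<times> nat \<times> nat \<times> nat"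
  define P2 where "P2 x = (case x of (k,a,b,c,d) \<Rightarrow> c = 0)" for x :: "nat \<times> nat \<times> nat \<times> nat \<times> nat"
  define P3 where "P3 x = (case x of (k,a,b,c,d) \<Rightarrow> k = 0)" for x :: "nat \<times> nat \<times> nat \<times> nat \<times> nat"
  define P4 where "P4 x = (case x of (k,a,b,c,d) \<Rightarrow> k = 0 \<and> c = 0 \<and> d = 0)" for x :: "nat \<times> nat \<times> nat \<times> nat \<times> nat"
  have pt: "int (born H_edges H_endpts t HA HB (bt t x)) = of_bool (P1 x) + of_bool (P2 x) + of_bool (P3 x) - of_bool (P4 x)" for x
  proof -
    obtain k a b c d where x: "x = (k,a,b,c,d)" by (metis prod_cases5)
    show ?thesis unfolding x P1_def P2_def P3_def P4_def using bornHB[OF li] by simp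
  qed
  have "int (Nborn H_edges H_endpts t HA HB T) = (\<Sum>x\<in>Q. int (born H_edges H_endpts t HA HB (bt t x)))"
    unfolding Nborn_def ev by (simp add: sum.reindex[OF inj])
  also have "\<dots> = (\<Sum>x\<in>Q. of_bool (P1 x) + of_bool (P2 x) + of_bool (P3 x) - of_bool (P4 x))"
    using pt by simp
  also have "\<dots> = int (card (Q \<inter> {x. P1 x})) + int (card (Q \<inter> {x. P2 x})) + int (card (Q \<inter> {x. P3 x})) - int (card (Q \<inter> {x. P4 x}))"
    using fin by (simp add: sum.distrib sum_subtractf)
  also have "\<dots> = int (lattice_count [t 1, t 2, t 3, t 4] (T - t 3))
         + int (lattice_count [t 1, t 2, t 3, t 5] (T - t 3))
         + int (lattice_count [t 1, t 2, t 4, t 5] (T - t 3))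
         - int (lattice_count [t 1, t 2] (T - t 3))"
    unfolding lc1 lc2 lc3 lc4 Q_def P1_def P2_def P3_def P4_def by simp
  finally show ?thesis .
qed

end
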